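(* Let $n=a+b$ with $a,b\ge1$, let $\lambda$ be the standard (invariant) volume measure on the Grassmannian $G(n,a)$ of $a$-dimensional linear subspaces of $\mathbb R^n$, and let $\mu$ be a finite positive Borel measure on $G(n,b)$. Then \[ \lambda\Big(\big\{E\in G(n,a):\ \mu(\{F\in G(n,b):E\not\pitchfork F\})>0\big\}\Big)=0 . \]
   Context: $E\pitchfork F$ (transversal) means $E+F=\mathbb R^n$, equivalently (as $\dim E+\dim F=n$) $E\cap F=\{0\}$; $E\not\pitchfork F$ means they are not transversal. *)

theory Defs
  imports "HOL-Probability.Probability"
begin

definition grass :: "nat \<Rightarrow> (real^'n) set set" where
  "grass k = {E. subspace E \<and> dim E = k}"

definition proj_mat :: "(real^'n) set \<Rightarrow> real^'n^'n" where
  "proj_mat E = matrix (closest_point E)"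

text \<open>Borel structure on G(n,k): the standard topology of the Grassmannian is the one
  induced by the (injective) embedding E \<mapsto> orthogonal projection onto E.\<close>
definition grass_borel :: "nat \<Rightarrow> (real^'n) set measure" where
  "grass_borel k = vimage_algebra (grass k) proj_mat borel"

definition transversal :: "(real^'n) set \<Rightarrow> (real^'n) set \<Rightarrow> bool" where
  "transversal E F \<longleftrightarrow> {x + y | x y. x \<in> E \<and> y \<in> F} = UNIV"

definition gauss_vec :: "(real^'n) measure" where
  "gauss_vec = density lborel (\<lambda>x. ennreal (\<Prod>i\<in>UNIV. std_normal_density (x $ i)))"

text \<open>Span of an a-tuple of vectors; degenerate (measure-zero) tuples are sent to a fixed point.\<close>
definition tuple_span :: "nat \<Rightarrow> (nat \<Rightarrow> real^'n) \<Rightarrow> (real^'n) set" where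
  "tuple_span k v = (if dim (span (v ` {..<k})) = k then span (v ` {..<k})
                     else (SOME E. E \<in> grass k))"

text \<open>The standard O(n)-invariant probability measure on G(n,k): the law of the span of
  k independent standard Gaussian vectors in R^n.\<close>
definition grass_measure :: "nat \<Rightarrow> (real^'n) set measure" where
  "grass_measure k = distr (PiM {..<k} (\<lambda>_. gauss_vec)) (grass_borel k) (tuple_span k)"

end

theory Submission
  imports Defs
begin


lemma cp_orth:
  fixes S :: "(real^'n) set"
  assumes "subspace S"
  shows "closest_point S x \<in> S" "\<And>s. s \<in> S \<Longrightarrow> (x - closest_point S x) \<bullet> s = 0"
proof -
  have cl: "closed S" using assms closed_subspace by blast
  have ne: "S \<noteq> {}" using assms subspace_0 by blast
  have cv: "convex S" using assms subspace_imp_convex by blast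
  show c: "closest_point S x \<in> S" using closest_point_in_set[OF cl ne] .
  fix s assume s: "s \<in> S"
  let ?c = "closest_point S x"
  have "?c + s \<in> S" using c s assms subspace_add by blast
  from closest_point_dot[OF cv cl this, of x] have 1: "(x - ?c) \<bullet> s \<le> 0" by simp
  have "?c - s \<in> S" using c s assms subspace_diff by blast
  from closest_point_dot[OF cv cl this, of x] have 2: "(x - ?c) \<bullet> (- s) \<le> 0" by simp
  from 1 2 show "(x - ?c) \<bullet> s = 0" by (simp add: inner_minus_right)
qed

lemma cp_unique:
  fixes S :: "(real^'n) set"
  assumes "subspace S" "p \<in> S" "\<And>s. s \<in> S \<Longrightarrow> (x - p) \<bullet> s = 0"
  shows "closest_point S x = p"
proof -
  have cl: "closed S" using assms closed_subspace by blast
  have cv: "convex S" using assms subspace_imp_convex by blast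
  have "dist x p \<le> dist x z" if z: "z \<in> S" for z
  proof -
    have pz: "p - z \<in> S" using assms(1,2) z subspace_diff by blast
    have "(norm (x - z))^2 = (norm ((x - p) + (p - z)))^2" by simp
    also have "\<dots> = (norm (x - p))^2 + (norm (p - z))^2 + 2 * ((x - p) \<bullet> (p - z))"
      unfolding power2_norm_eq_inner by (simp add: inner_diff_left inner_diff_right inner_commute algebra_simps)
    also have "\<dots> = (norm (x - p))^2 + (norm (p - z))^2" using assms(3)[OF pz] by simp
    finally have "(norm (x - p))^2 \<le> (norm (x - z))^2" by simp
    from power2_le_imp_le[OF this norm_ge_zero] show ?thesis by (simp add: dist_norm)
  qed
  then have "\<forall>z\<in>S. dist x p \<le> dist x z" by blast
  from closest_point_unique[OF cv cl assms(2) this] show ?thesis by simp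
qed

lemma cp_linear:
  fixes S :: "(real^'n) set"
  assumes "subspace S"
  shows "linear (closest_point S)"
proof (rule linearI)
  fix x y :: "real^'n"
  show "closest_point S (x + y) = closest_point S x + closest_point S y"
    apply (rule cp_unique[OF assms])
    using cp_orth[OF assms] assms subspace_add apply blast
  proof -
    fix s assume s: "s \<in> S"
    have 1: "(x - closest_point S x) \<bullet> s = 0" using cp_orth(2)[OF assms s] .
    have 2: "(y - closest_point S y) \<bullet> s = 0" using cp_orth(2)[OF assms s] .
    have "x + y - (closest_point S x + closest_point S y) = (x - closest_point S x) + (y - closest_point S y)"
      by simp
    then show "(x + y - (closest_point S x + closest_point S y)) \<bullet> s = 0"
      using 1 2 by (simp only: inner_add_left)
  qed
next
  fix r :: real and x :: "real^'n"
  show "closest_point S (r *\<^sub>R x) = r *\<^sub>R closest_point S x"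
    apply (rule cp_unique[OF assms])
    using cp_orth[OF assms] assms subspace_scale apply blast
  proof -
    fix s assume s: "s \<in> S"
    have 1: "(x - closest_point S x) \<bullet> s = 0" using cp_orth(2)[OF assms s] .
    have "r *\<^sub>R x - r *\<^sub>R closest_point S x = r *\<^sub>R (x - closest_point S x)"
      by (simp add: scaleR_right_diff_distrib)
    then show "(r *\<^sub>R x - r *\<^sub>R closest_point S x) \<bullet> s = 0"
      using 1 by simp
  qed
qed

lemma proj_mat_apply:
  fixes S :: "(real^'n) set"
  assumes "subspace S"
  shows "proj_mat S *v x = closest_point S x"
proof -
  have "(\<lambda>x. matrix (closest_point S) *v x) = closest_point S"
    by (rule matrix_vector_mul(2)[OF cp_linear[OF assms]])
  from fun_cong[OF this, of x] show ?thesis by (simp add: proj_mat_def)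
qed

lemma proj_mat_zero_iff:
  fixes S :: "(real^'n) set"
  assumes "subspace S"
  shows "proj_mat S *v x = 0 \<longleftrightarrow> (\<forall>s\<in>S. s \<bullet> x = 0)"
proof
  assume "proj_mat S *v x = 0"
  then have "closest_point S x = 0" by (simp add: proj_mat_apply[OF assms])
  then show "\<forall>s\<in>S. s \<bullet> x = 0" using cp_orth(2)[OF assms, of _ x] by (simp add: inner_commute)
next
  assume "\<forall>s\<in>S. s \<bullet> x = 0"
  then have "closest_point S x = 0"
    by (intro cp_unique[OF assms]) (auto simp: assms subspace_0 inner_commute)
  then show "proj_mat S *v x = 0" by (simp add: proj_mat_apply[OF assms])
qed

lemma nontransversal_iff:
  fixes E F :: "(real^'n) set"
  assumes E: "subspace E" and F: "subspace F"
  shows "\<not> transversal E F \<longleftrightarrow> (\<exists>y. norm y = 1 \<and> (\<forall>e\<in>E. e \<bullet> y = 0) \<and> (\<forall>f\<in>F. f \<bullet> y = 0))"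
proof
  let ?W = "{x + y | x y. x \<in> E \<and> y \<in> F}"
  assume nt: "\<not> transversal E F"
  have sW: "subspace ?W" using subspace_sums[OF E F] .
  have "?W \<noteq> UNIV" using nt unfolding transversal_def by simp
  moreover have "span ?W = ?W" using sW by (simp only: span_eq_iff)
  ultimately have "span ?W \<noteq> UNIV" by (simp only: not_False_eq_True)
  then have "dim ?W \<noteq> DIM(real^'n)" by (simp only: dim_eq_full not_False_eq_True)
  moreover have "dim ?W \<le> DIM(real^'n)" by (rule dim_subset_UNIV)
  ultimately have "dim ?W < DIM(real^'n)" by linarith
  then obtain z where z: "z \<noteq> 0" "\<And>w. w \<in> span ?W \<Longrightarrow> orthogonal z w"
    using orthogonal_to_subspace_exists by blast
  let ?y = "z /\<^sub>R norm z"
  have "w \<bullet> ?y = 0" if "w \<in> ?W" for w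
  proof -
    have "orthogonal z w" using z(2) span_base[OF that] by blast
    then have "w \<bullet> z = 0" by (simp add: orthogonal_def inner_commute)
    then show ?thesis by simp
  qed
  note wy = this
  have eW: "e \<in> ?W" if "e \<in> E" for e
  proof -
    have "e = e + 0 \<and> e \<in> E \<and> 0 \<in> F" using that subspace_0[OF F] by simp
    then show ?thesis by blast
  qed
  have fW: "f \<in> ?W" if "f \<in> F" for f
  proof -
    have "f = 0 + f \<and> 0 \<in> E \<and> f \<in> F" using that subspace_0[OF E] by simp
    then show ?thesis by blast
  qed
  show "\<exists>y. norm y = 1 \<and> (\<forall>e\<in>E. e \<bullet> y = 0) \<and> (\<forall>f\<in>F. f \<bullet> y = 0)"
  proof (intro exI[of _ ?y] conjI ballI)
    show "norm ?y = 1" using z(1) by simp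
    fix e assume "e \<in> E" then show "e \<bullet> ?y = 0" using wy eW by blast
  next
    fix f assume "f \<in> F" then show "f \<bullet> ?y = 0" using wy fW by blast
  qed
next
  assume "\<exists>y. norm y = 1 \<and> (\<forall>e\<in>E. e \<bullet> y = 0) \<and> (\<forall>f\<in>F. f \<bullet> y = 0)"
  then obtain y where y: "norm y = 1" "\<forall>e\<in>E. e \<bullet> y = 0" "\<forall>f\<in>F. f \<bullet> y = 0" by blast
  show "\<not> transversal E F"
  proof
    assume "transversal E F"
    then have "y \<in> {x + y | x y. x \<in> E \<and> y \<in> F}" unfolding transversal_def by simp
    then obtain e f where "y = e + f" "e \<in> E" "f \<in> F" by blast
    then have "y \<bullet> y = 0" using y by (simp add: inner_add_left)
    then show False using y(1) by simp
  qed
qed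



lemma meas_exists_zero:
  fixes H :: "'w \<Rightarrow> 'a::euclidean_space \<Rightarrow> real"
  assumes nonneg: "\<And>w y. 0 \<le> H w y"
    and cont: "\<And>w. continuous_on UNIV (H w)"
    and meas: "\<And>y. (\<lambda>w. H w y) \<in> borel_measurable N"
    and coerc: "\<And>w y. H w y < 1 \<Longrightarrow> norm y \<le> 2"
  shows "{w \<in> space N. \<exists>y. H w y = 0} \<in> sets N"
proof -
  obtain D :: "'a set" where D: "countable D" "\<And>X. open X \<Longrightarrow> X \<noteq> {} \<Longrightarrow> \<exists>d\<in>D. d \<in> X"
    using countable_dense_setE by blast
  have eq: "{w \<in> space N. \<exists>y. H w y = 0} = (\<Inter>m. \<Union>d\<in>D. {w \<in> space N. H w d < 1 / Suc m})"
  proof (intro equalityI subsetI)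
    fix w assume "w \<in> {w \<in> space N. \<exists>y. H w y = 0}"
    then obtain y where w: "w \<in> space N" and y: "H w y = 0" by blast
    show "w \<in> (\<Inter>m. \<Union>d\<in>D. {w \<in> space N. H w d < 1 / Suc m})"
    proof
      fix m :: nat
      have "isCont (H w) y" using cont continuous_on_eq_continuous_at open_UNIV by blast
      moreover have "(0::real) < 1 / Suc m" by simp
      ultimately obtain \<delta> where \<delta>: "\<delta> > 0" "\<And>z. dist z y < \<delta> \<Longrightarrow> dist (H w z) (H w y) < 1 / Suc m"
        unfolding continuous_at_eps_delta by metis
      obtain d where d: "d \<in> D" "d \<in> ball y \<delta>" using D(2)[of "ball y \<delta>"] \<delta>(1) by auto
      have "dist (H w d) (H w y) < 1 / Suc m" using \<delta>(2)[of d] d(2) by (simp add: dist_commute)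
      then have "H w d < 1 / Suc m" using y nonneg[of w d] by (simp add: dist_real_def)
      then show "w \<in> (\<Union>d\<in>D. {w \<in> space N. H w d < 1 / Suc m})" using d(1) w by blast
    qed
  next
    fix w assume w: "w \<in> (\<Inter>m. \<Union>d\<in>D. {w \<in> space N. H w d < 1 / Suc m})"
    then have ws: "w \<in> space N" by blast
    have "\<forall>m. \<exists>d. H w d < 1 / Suc m" using w by blast
    then obtain f where f: "\<And>m. H w (f m) < 1 / Suc m" by metis
    have fb: "norm (f m) \<le> 2" for m
    proof -
      have "(1::real) / Suc m \<le> 1" by (simp add: divide_le_eq)
      then show ?thesis using f[of m] by (intro coerc[of w]) linarith
    qed
    have "bounded (range f)" using fb by (auto simp: bounded_iff)
    then obtain l r where r: "strict_mono r" and lim: "(f \<circ> r) \<longlonglongrightarrow> l"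
      using bounded_imp_convergent_subsequence by blast
    have "isCont (H w) l" using cont continuous_on_eq_continuous_at open_UNIV by blast
    from isCont_tendsto_compose[OF this lim] have L1: "(\<lambda>m. H w (f (r m))) \<longlonglongrightarrow> H w l"
      by (simp add: o_def)
    have z: "(\<lambda>m. 1 / real (Suc m)) \<longlonglongrightarrow> 0"
      using LIMSEQ_Suc[OF lim_1_over_n] by simp
    have le: "H w (f (r m)) \<le> 1 / real (Suc m)" for m
    proof -
      have "m \<le> r m" using r by (simp add: seq_suble)
      then have "1 / real (Suc (r m)) \<le> 1 / real (Suc m)" by (simp add: frac_le)
      then show ?thesis using f[of "r m"] by linarith
    qed
    have e1: "\<forall>\<^sub>F m in sequentially. 0 \<le> H w (f (r m))" by (simp add: nonneg)
    have e2: "\<forall>\<^sub>F m in sequentially. H w (f (r m)) \<le> 1 / real (Suc m)"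
      using le by (intro always_eventually) blast
    have L2: "(\<lambda>m. H w (f (r m))) \<longlonglongrightarrow> 0"
      by (rule real_tendsto_sandwich[OF e1 e2 tendsto_const z])
    have "H w l = 0" using LIMSEQ_unique[OF L1 L2] .
    then show "w \<in> {w \<in> space N. \<exists>y. H w y = 0}" using ws by blast
  qed
  have m1: "{w \<in> space N. H w d < c} \<in> sets N" for d c
    using meas[of d] by measurable
  have "(\<Inter>m. \<Union>d\<in>D. {w \<in> space N. H w d < 1 / Suc m}) \<in> sets N"
  proof (rule sets.countable_INT)
    have "(\<Union>d\<in>D. {w \<in> space N. H w d < 1 / Suc m}) \<in> sets N" for m
      by (intro sets.countable_UN'' D(1) m1)
    then show "range (\<lambda>m. \<Union>d\<in>D. {w \<in> space N. H w d < 1 / Suc m}) \<subseteq> sets N" by blast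
  qed simp
  then show ?thesis using eq by simp
qed



lemma gauss_f_meas:
  "(\<lambda>x::real^'n. ennreal (\<Prod>i\<in>UNIV. std_normal_density (x $ i))) \<in> borel_measurable borel"
  by measurable

lemma sets_gauss[simp]: "sets (gauss_vec :: (real^'n) measure) = sets borel"
  by (simp add: gauss_vec_def)

lemma space_gauss[simp]: "space (gauss_vec :: (real^'n) measure) = UNIV"
  by (simp add: gauss_vec_def)

lemma sigma_finite_gauss: "sigma_finite_measure (gauss_vec :: (real^'n) measure)"
  unfolding gauss_vec_def
  by (subst sigma_finite_measure.sigma_finite_iff_density_finite'[OF sigma_finite_lborel]) (use gauss_f_meas in auto)

lemma gauss_hyperplane_null:
  fixes u :: "real^'n"
  assumes "u \<noteq> 0"
  shows "{x. u \<bullet> x = 0} \<in> null_sets gauss_vec"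
proof -
  have neg: "negligible {x. u \<bullet> x = 0}" using negligible_hyperplane[of u 0] assms by simp
  have bor: "{x. u \<bullet> x = 0} \<in> sets lborel"
    using closed_hyperplane[of u 0] by (simp add: borel_closed)
  have "{x. u \<bullet> x = 0} \<in> null_sets lborel"
    using neg bor by (simp add: negligible_iff_null_sets null_sets_completion_iff)
  then show ?thesis unfolding gauss_vec_def
    using gauss_f_meas bor
    by (subst null_sets_density_iff) (auto intro: AE_mp[OF AE_not_in])
qed

abbreviation GM :: "nat \<Rightarrow> (nat \<Rightarrow> real^'n) measure" where
  "GM k \<equiv> PiM {..<k} (\<lambda>_. gauss_vec)"

definition Tset :: "nat \<Rightarrow> (real^'n) set \<Rightarrow> (nat \<Rightarrow> real^'n) set" where
  "Tset k G = {v \<in> space (GM k). \<exists>u. u \<in> G \<and> norm u = 1 \<and> (\<forall>i<k. v i \<bullet> u = 0)}"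

lemma comp_meas_gauss:
  fixes k :: nat and i :: nat and u :: "real^'n"
  assumes "i < k"
  shows "(\<lambda>v. \<bar>v i \<bullet> u\<bar>) \<in> borel_measurable (GM k)"
proof -
  have 1: "(\<lambda>v. v i) \<in> measurable (GM k) (gauss_vec :: (real^'n) measure)"
    using assms by (intro measurable_component_singleton) simp
  have 2: "(\<lambda>x::real^'n. \<bar>x \<bullet> u\<bar>) \<in> borel_measurable gauss_vec"
  proof -
    have eqm: "measurable (gauss_vec :: (real^'n) measure) borel = measurable borel borel"
      by (rule measurable_cong_sets) simp_all
    show ?thesis
      by (subst eqm) (intro borel_measurable_continuous_onI continuous_intros)
  qed
  show ?thesis using measurable_comp[OF 1 2] by (simp add: o_def)
qed

lemma Tset_sets:
  fixes G :: "(real^'n) set"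
  assumes G: "subspace G"
  shows "Tset k G \<in> sets (GM k)"
proof -
  define H where "H v u = (\<Sum>i<k. \<bar>v i \<bullet> u\<bar>) + infdist u G + \<bar>norm u - 1\<bar>" for v :: "nat \<Rightarrow> real^'n" and u :: "real^'n"
  have cl: "closed G" using G closed_subspace by blast
  have ne: "G \<noteq> {}" using G subspace_0 by blast
  have nn: "0 \<le> H v u" for v u unfolding H_def by (simp add: sum_nonneg infdist_nonneg)
  have eq: "Tset k G = {v \<in> space (GM k). \<exists>u. H v u = 0}"
  proof -
    have "H v u = 0 \<longleftrightarrow> u \<in> G \<and> norm u = 1 \<and> (\<forall>i<k. v i \<bullet> u = 0)" for v u
    proof -
      have a: "0 \<le> (\<Sum>i<k. \<bar>v i \<bullet> u\<bar>)" by (simp add: sum_nonneg)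
      have b: "0 \<le> infdist u G" by (simp add: infdist_nonneg)
      have "H v u = 0 \<longleftrightarrow> (\<Sum>i<k. \<bar>v i \<bullet> u\<bar>) = 0 \<and> infdist u G = 0 \<and> \<bar>norm u - 1\<bar> = 0"
        unfolding H_def using a b by (smt (verit) abs_ge_zero)
      also have "\<dots> \<longleftrightarrow> (\<forall>i<k. v i \<bullet> u = 0) \<and> u \<in> G \<and> norm u = 1"
        using in_closed_iff_infdist_zero[OF cl ne, of u]
        by (auto simp: sum_nonneg_eq_0_iff)
      finally show ?thesis by blast
    qed
    then show ?thesis unfolding Tset_def by blast
  qed
  have "{v \<in> space (GM k). \<exists>u. H v u = 0} \<in> sets (GM k)"
  proof (rule meas_exists_zero)
    show "0 \<le> H w y" for w y by (rule nn)
    show "continuous_on UNIV (H w)" for w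
      unfolding H_def[abs_def] by (intro continuous_intros)
    show "(\<lambda>w. H w y) \<in> borel_measurable (GM k)" for y
      unfolding H_def using comp_meas_gauss by (intro borel_measurable_add borel_measurable_sum) auto
    show "norm y \<le> 2" if h: "H w y < 1" for w y
    proof -
      have "0 \<le> (\<Sum>i<k. \<bar>w i \<bullet> y\<bar>)" by (simp add: sum_nonneg)
      moreover have "0 \<le> infdist y G" by (rule infdist_nonneg)
      ultimately have "\<bar>norm y - 1\<bar> < 1" using h unfolding H_def by linarith
      then show ?thesis by linarith
    qed
  qed
  then show ?thesis using eq by simp
qed

lemma Tset_null:
  "\<And>G :: (real^'n) set. subspace G \<Longrightarrow> dim G \<le> k \<Longrightarrow> Tset k G \<in> null_sets (GM k)"
proof (induction k)
  case 0
  then have "G \<subseteq> {0}" using dim_eq_0 by (metis le_zero_eq)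
  then have "Tset 0 G = {}" unfolding Tset_def by auto
  then show ?case by simp
next
  case (Suc k)
  note G = Suc.prems(1)
  show ?case
  proof (cases "G \<subseteq> {0}")
    case True
    then have "Tset (Suc k) G = {}" unfolding Tset_def by auto
    then show ?thesis by simp
  next
    case False
    then obtain u0 where u0: "u0 \<in> G" "u0 \<noteq> 0" by blast
    interpret P: product_sigma_finite "\<lambda>_::nat. gauss_vec :: (real^'n) measure"
      by (simp add: product_sigma_finite_def sigma_finite_gauss)
    have ins: "{..<Suc k} = insert k {..<k}" by auto
    let ?T = "Tset (Suc k) G"
    have Tm: "?T \<in> sets (GM (Suc k))" using Tset_sets[OF G] .
    define inn where "inn y = (\<integral>\<^sup>+ x. indicator ?T (x(k := y)) \<partial>GM k)" for y :: "real^'n"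
    have inner0: "inn y = 0" if y: "u0 \<bullet> y \<noteq> 0" for y
    proof -
      define G' where "G' = {u \<in> G. y \<bullet> u = 0}"
      have sG': "subspace G'" unfolding G'_def
        using subspace_inter[OF G subspace_hyperplane[of y]] by (simp add: Int_def)
      have "G' \<subset> G" using u0 y unfolding G'_def by (auto simp: inner_commute)
      then have "span G' \<subset> span G"
        by (simp add: span_eq_iff[THEN iffD2, OF sG'] span_eq_iff[THEN iffD2, OF G])
      then have "dim G' < dim G" by (rule dim_psubset)
      then have "dim G' \<le> k" using Suc.prems(2) by simp
      then have N: "Tset k G' \<in> null_sets (GM k)" using Suc.IH sG' by blast
      have "AE x in GM k. indicator ?T (x(k := y)) = (0::ennreal)"
      proof (rule AE_I'[OF N], safe)
        fix x assume x: "x \<in> space (GM k)" and ne: "indicator ?T (x(k := y)) \<noteq> (0::ennreal)"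
        then have "x(k := y) \<in> ?T" by (auto simp: indicator_def split: if_splits)
        then obtain u where u: "u \<in> G" "norm u = 1" "\<forall>i<Suc k. (x(k := y)) i \<bullet> u = 0"
          unfolding Tset_def by blast
        have "y \<bullet> u = 0" using u(3)[rule_format, of k] by simp
        moreover have "\<forall>i<k. x i \<bullet> u = 0"
        proof (intro allI impI)
          fix i assume "i < k"
          then have "i < Suc k" "i \<noteq> k" by auto
          then show "x i \<bullet> u = 0" using u(3)[rule_format, of i] by simp
        qed
        ultimately show "x \<in> Tset k G'" using x u unfolding Tset_def G'_def by auto
      qed
      from nn_integral_cong_AE[OF this] show ?thesis by (simp add: inn_def)
    qed
    have "emeasure (GM (Suc k)) ?T = (\<integral>\<^sup>+ v. indicator ?T v \<partial>GM (Suc k))"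
      using Tm by simp
    also have "\<dots> = (\<integral>\<^sup>+ y. (\<integral>\<^sup>+ x. indicator ?T (x(k := y)) \<partial>GM k) \<partial>gauss_vec)"
      unfolding ins
      by (rule P.product_nn_integral_insert_rev) (use Tm ins in auto)
    also have "\<dots> = (\<integral>\<^sup>+ y. inn y \<partial>(gauss_vec :: (real^'n) measure))" by (simp add: inn_def)
    also have "\<dots> = 0"
    proof -
      have AEo: "AE y in (gauss_vec :: (real^'n) measure). inn y = 0"
        by (rule AE_I'[OF gauss_hyperplane_null[OF u0(2)]]) (auto intro: inner0)
      from nn_integral_cong_AE[OF AEo]
      have "(\<integral>\<^sup>+ y. inn y \<partial>(gauss_vec :: (real^'n) measure)) = (\<integral>\<^sup>+ y. 0 \<partial>(gauss_vec :: (real^'n) measure))" .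
      then show ?thesis by simp
    qed
    finally show ?thesis using Tm by (simp add: null_sets_def)
  qed
qed



lemma mv_norm_meas: "(\<lambda>P::real^'n^'n. norm (P *v y)) \<in> borel_measurable borel"
proof -
  have "linear (\<lambda>P::real^'n^'n. P *v y)"
    by (intro linearI)
      (simp_all add: vec_eq_iff matrix_vector_mult_def sum_distrib_left sum.distrib algebra_simps)
  then have "bounded_linear (\<lambda>P::real^'n^'n. P *v y)" by (simp add: linear_conv_bounded_linear)
  then have "continuous_on UNIV (\<lambda>P::real^'n^'n. P *v y)" by (rule linear_continuous_on)
  then have "continuous_on UNIV (\<lambda>P::real^'n^'n. norm (P *v y))" by (intro continuous_intros)
  then show ?thesis by (rule borel_measurable_continuous_onI)
qed

lemma sum3_zero:
  fixes a :: "'a::real_normed_vector" and b :: "'b::real_normed_vector" and c :: real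
  shows "norm a + norm b + \<bar>c\<bar> = 0 \<longleftrightarrow> a = 0 \<and> b = 0 \<and> c = 0"
proof -
  have "0 \<le> norm a" "0 \<le> norm b" "0 \<le> \<bar>c\<bar>" by simp_all
  then have "norm a + norm b + \<bar>c\<bar> = 0 \<longleftrightarrow> norm a = 0 \<and> norm b = 0 \<and> \<bar>c\<bar> = 0" by linarith
  then show ?thesis by simp
qed

theorem lemma5p2:
  fixes a b :: nat and \<mu> :: "(real^'n) set measure"
  assumes "a \<ge> 1" and "b \<ge> 1" and "CARD('n) = a + b"
    and "finite_measure \<mu>" and "sets \<mu> = sets (grass_borel b)"
  shows "{E \<in> grass a. emeasure \<mu> {F \<in> grass b. \<not> transversal E F} > 0}
           \<in> null_sets (grass_measure a :: (real^'n) set measure)"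
proof -
  define S where "S = {E \<in> grass a. emeasure \<mu> {F \<in> grass b. \<not> transversal E F} > 0}"
  interpret mu: finite_measure \<mu> by fact
  have space_mu: "space \<mu> = grass b"
    using sets_eq_imp_space_eq[OF assms(5)] by (simp add: grass_borel_def)
  have meq: "measurable \<mu> (borel :: (real^'n^'n) measure) = measurable (grass_borel b) borel"
    by (rule measurable_cong_sets[OF assms(5) refl])
  have pm_meas: "proj_mat \<in> measurable \<mu> (borel :: (real^'n^'n) measure)"
    unfolding meq grass_borel_def by (rule measurable_vimage_algebra1) simp
  have grass_sub: "subspace E" if "E \<in> grass k" for E k using that by (simp add: grass_def)
  have dimUNIV: "dim (UNIV :: (real^'n) set) = a + b" using assms(3) by simp
  define H3 where "H3 p y = norm (fst p *v y) + norm (proj_mat (snd p) *v y) + \<bar>norm y - 1\<bar>"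
    for p :: "(real^'n^'n) \<times> ((real^'n) set)" and y :: "real^'n"
  define Q2 where "Q2 = {p \<in> space (borel \<Otimes>\<^sub>M \<mu>). \<exists>y. H3 p y = 0}"
  have Q2m: "Q2 \<in> sets (borel \<Otimes>\<^sub>M \<mu>)" unfolding Q2_def
  proof (rule meas_exists_zero)
    show "0 \<le> H3 w y" for w y unfolding H3_def by simp
    show "continuous_on UNIV (H3 w)" for w unfolding H3_def[abs_def] by (intro continuous_intros)
    show "(\<lambda>w. H3 w y) \<in> borel_measurable (borel \<Otimes>\<^sub>M \<mu>)" for y
    proof -
      have 1: "(\<lambda>p::(real^'n^'n) \<times> ((real^'n) set). norm (fst p *v y)) \<in> borel_measurable (borel \<Otimes>\<^sub>M \<mu>)"
        by (rule measurable_compose[OF measurable_fst mv_norm_meas])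
      have 2: "(\<lambda>p. norm (proj_mat (snd p) *v y)) \<in> borel_measurable (borel \<Otimes>\<^sub>M \<mu>)"
        by (rule measurable_compose[OF measurable_compose[OF measurable_snd pm_meas] mv_norm_meas])
      show ?thesis unfolding H3_def by (intro borel_measurable_add 1 2 borel_measurable_const)
    qed
    show "norm y \<le> 2" if "H3 w y < 1" for w y
    proof -
      have "0 \<le> norm (fst w *v y)" "0 \<le> norm (proj_mat (snd w) *v y)" by simp_all
      then have "\<bar>norm y - 1\<bar> < 1" using that unfolding H3_def by linarith
      then show ?thesis by linarith
    qed
  qed
  have fm: "(\<lambda>P. emeasure \<mu> (Pair P -` Q2)) \<in> borel_measurable (borel :: (real^'n^'n) measure)"
    by (rule mu.measurable_emeasure_Pair[OF Q2m])
  define B where "B = {P \<in> space (borel :: (real^'n^'n) measure). 0 < emeasure \<mu> (Pair P -` Q2)}"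
  have Bm: "B \<in> sets borel" unfolding B_def using fm by measurable
  have sec2: "Pair (proj_mat E) -` Q2 = {F \<in> grass b. \<not> transversal E F}" if E: "E \<in> grass a" for E
  proof -
    have sE: "subspace E" using grass_sub[OF E] .
    have "(proj_mat E, F) \<in> Q2 \<longleftrightarrow> F \<in> grass b \<and> \<not> transversal E F" for F
    proof -
      have "(proj_mat E, F) \<in> Q2 \<longleftrightarrow> F \<in> grass b \<and>
          (\<exists>y. proj_mat E *v y = 0 \<and> proj_mat F *v y = 0 \<and> norm y = 1)"
        unfolding Q2_def H3_def by (simp add: space_pair_measure space_mu sum3_zero)
      also have "\<dots> \<longleftrightarrow> F \<in> grass b \<and> \<not> transversal E F"
        using nontransversal_iff[OF sE grass_sub[of F b]] proj_mat_zero_iff[OF sE]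
          proj_mat_zero_iff[OF grass_sub[of F b]] by blast
      finally show ?thesis .
    qed
    then show ?thesis by blast
  qed
  have "S = proj_mat -` B \<inter> grass a"
    unfolding S_def B_def using sec2 by auto
  then have Sm: "S \<in> sets (grass_borel a)"
    unfolding grass_borel_def using in_vimage_algebra[OF Bm] by simp
  interpret FP: finite_product_sigma_finite "\<lambda>_::nat. gauss_vec :: (real^'n) measure" "{..<a}"
    by (simp add: finite_product_sigma_finite_def product_sigma_finite_def
        finite_product_sigma_finite_axioms_def sigma_finite_gauss)
  have sfM: "sigma_finite_measure (GM a :: (nat \<Rightarrow> real^'n) measure)"
    by (rule FP.sigma_finite_measure_axioms)
  interpret PS: pair_sigma_finite "GM a :: (nat \<Rightarrow> real^'n) measure" \<mu>
    by (simp add: pair_sigma_finite_def sfM mu.sigma_finite_measure_axioms)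
  define H2 where "H2 p y = (\<Sum>i<a. \<bar>fst p i \<bullet> y\<bar>) + norm (proj_mat (snd p) *v y) + \<bar>norm y - 1\<bar>"
    for p :: "(nat \<Rightarrow> real^'n) \<times> (real^'n) set" and y :: "real^'n"
  define Q where "Q = {p \<in> space (GM a \<Otimes>\<^sub>M \<mu>). \<exists>y. H2 p y = 0}"
  have Qm: "Q \<in> sets (GM a \<Otimes>\<^sub>M \<mu>)" unfolding Q_def
  proof (rule meas_exists_zero)
    show "0 \<le> H2 w y" for w y unfolding H2_def by (simp add: sum_nonneg)
    show "continuous_on UNIV (H2 w)" for w unfolding H2_def[abs_def] by (intro continuous_intros)
    show "(\<lambda>w. H2 w y) \<in> borel_measurable (GM a \<Otimes>\<^sub>M \<mu>)" for y
    proof -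
      have 1: "(\<lambda>p. \<bar>fst p i \<bullet> y\<bar>) \<in> borel_measurable (GM a \<Otimes>\<^sub>M \<mu>)" if "i < a" for i
        by (rule measurable_compose[OF measurable_fst comp_meas_gauss[OF that, of y]])
      have 2: "(\<lambda>p. norm (proj_mat (snd p) *v y)) \<in> borel_measurable (GM a \<Otimes>\<^sub>M \<mu>)"
        by (rule measurable_compose[OF measurable_compose[OF measurable_snd pm_meas] mv_norm_meas])
      show ?thesis unfolding H2_def using 1 2
        by (intro borel_measurable_add borel_measurable_sum) auto
    qed
    show "norm y \<le> 2" if "H2 w y < 1" for w y
    proof -
      have "0 \<le> (\<Sum>i<a. \<bar>fst w i \<bullet> y\<bar>)" by (simp add: sum_nonneg)
      moreover have "0 \<le> norm (proj_mat (snd w) *v y)" by simp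
      ultimately have "\<bar>norm y - 1\<bar> < 1" using that unfolding H2_def by linarith
      then show ?thesis by linarith
    qed
  qed
  have secF: "emeasure (GM a) ((\<lambda>x. (x, F)) -` Q) = 0" if F: "F \<in> space \<mu>" for F
  proof -
    have Fg: "F \<in> grass b" using F space_mu by simp
    have sF: "subspace F" using grass_sub[OF Fg] .
    define GF where "GF = {y :: real^'n. \<forall>x\<in>F. orthogonal x y}"
    have sGF: "subspace GF" unfolding GF_def by (rule subspace_orthogonal_to_vectors)
    have "dim {y \<in> UNIV. \<forall>x\<in>F. orthogonal x y} + dim F = dim (UNIV :: (real^'n) set)"
      by (rule dim_subspace_orthogonal_to_vectors) (simp_all add: sF)
    then have "dim GF = a" unfolding GF_def using dimUNIV Fg by (simp add: grass_def)
    then have N: "Tset a GF \<in> null_sets (GM a)" using Tset_null[OF sGF] by simp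
    have "(\<lambda>x. (x, F)) -` Q \<subseteq> Tset a GF"
    proof
      fix v assume "v \<in> (\<lambda>x. (x, F)) -` Q"
      then have vs: "v \<in> space (GM a)" and "\<exists>y. H2 (v, F) y = 0"
        unfolding Q_def by (auto simp: space_pair_measure)
      then obtain y where y: "H2 (v, F) y = 0" by blast
      have a0: "0 \<le> (\<Sum>i<a. \<bar>v i \<bullet> y\<bar>)" by (simp add: sum_nonneg)
      have "0 \<le> norm (proj_mat F *v y)" "0 \<le> \<bar>norm y - 1\<bar>" by simp_all
      then have "(\<Sum>i<a. \<bar>v i \<bullet> y\<bar>) = 0 \<and> norm (proj_mat F *v y) = 0 \<and> \<bar>norm y - 1\<bar> = 0"
        using y a0 unfolding H2_def fst_conv snd_conv by linarith
      then have "(\<Sum>i<a. \<bar>v i \<bullet> y\<bar>) = 0" "proj_mat F *v y = 0" "norm y = 1" by simp_all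
      then have "\<forall>i<a. v i \<bullet> y = 0" "\<forall>s\<in>F. s \<bullet> y = 0" "norm y = 1"
        using proj_mat_zero_iff[OF sF] by (auto simp: sum_nonneg_eq_0_iff)
      then show "v \<in> Tset a GF" unfolding Tset_def GF_def using vs by (auto simp: orthogonal_def)
    qed
    then have "emeasure (GM a) ((\<lambda>x. (x, F)) -` Q) \<le> emeasure (GM a) (Tset a GF)"
      using N by (intro emeasure_mono) auto
    moreover have "emeasure (GM a) (Tset a GF) = 0" using N by (rule null_setsD1)
    ultimately show ?thesis by simp
  qed
  have "emeasure (GM a \<Otimes>\<^sub>M \<mu>) Q = (\<integral>\<^sup>+F. emeasure (GM a) ((\<lambda>x. (x, F)) -` Q) \<partial>\<mu>)"
    by (rule PS.emeasure_pair_measure_alt2[OF Qm])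
  also have "\<dots> = (\<integral>\<^sup>+F. 0 \<partial>\<mu>)" by (rule nn_integral_cong) (simp add: secF)
  finally have Q0: "emeasure (GM a \<Otimes>\<^sub>M \<mu>) Q = 0" by simp
  have fQ: "(\<lambda>v. emeasure \<mu> (Pair v -` Q)) \<in> borel_measurable (GM a)"
    by (rule mu.measurable_emeasure_Pair[OF Qm])
  have "(\<integral>\<^sup>+v. emeasure \<mu> (Pair v -` Q) \<partial>GM a) = 0"
    using Q0 mu.emeasure_pair_measure_alt[OF Qm] by simp
  then have AEQ: "AE v in GM a. emeasure \<mu> (Pair v -` Q) = 0"
    using nn_integral_0_iff_AE[OF fQ] by simp
  define Y where "Y = {v \<in> space (GM a). 0 < emeasure \<mu> (Pair v -` Q)}"
  have Ym: "Y \<in> sets (GM a)" unfolding Y_def using fQ by measurable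
  have Y0: "emeasure (GM a) Y = 0"
  proof -
    have "{v \<in> space (GM a). \<not> emeasure \<mu> (Pair v -` Q) = 0} = Y"
      unfolding Y_def by (auto simp: zero_less_iff_neq_zero)
    then show ?thesis using AEQ AE_iff_measurable[OF Ym] by simp
  qed
  have XY: "tuple_span a -` S \<inter> space (GM a) \<subseteq> Y"
  proof
    fix v assume v: "v \<in> tuple_span a -` S \<inter> space (GM a)"
    then have vs: "v \<in> space (GM a)" by blast
    have pos: "0 < emeasure \<mu> {F \<in> grass b. \<not> transversal (tuple_span a v) F}"
      using v unfolding S_def by blast
    define V where "V = span (v ` {..<a})"
    have sV: "subspace V" unfolding V_def by simp
    have nV: "\<not> transversal V F" if F: "F \<in> grass b" "\<not> transversal (tuple_span a v) F" for F
    proof (cases "dim V = a")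
      case True
      then have "tuple_span a v = V" unfolding tuple_span_def V_def by simp
      then show ?thesis using F by simp
    next
      case False
      have "dim V = dim (v ` {..<a})" unfolding V_def by simp
      also have "\<dots> \<le> card (v ` {..<a})" by (rule dim_le_card) (auto intro: span_base)
      also have "\<dots> \<le> a" using card_image_le[of "{..<a}" v] by simp
      finally have "dim V < a" using False by simp
      have sF: "subspace F" using grass_sub[OF F(1)] .
      have "dim {x + y |x y. x \<in> V \<and> y \<in> F} + dim (V \<inter> F) = dim V + dim F"
        by (rule dim_sums_Int[OF sV sF])
      then have "dim {x + y |x y. x \<in> V \<and> y \<in> F} < a + b"
        using \<open>dim V < a\<close> F(1) by (simp add: grass_def)
      then show ?thesis unfolding transversal_def using dimUNIV by auto
    qed
    have sub: "{F \<in> grass b. \<not> transversal (tuple_span a v) F} \<subseteq> Pair v -` Q"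
    proof
      fix F assume "F \<in> {F \<in> grass b. \<not> transversal (tuple_span a v) F}"
      then have F: "F \<in> grass b" "\<not> transversal (tuple_span a v) F" by auto
      have sF: "subspace F" using grass_sub[OF F(1)] .
      obtain y where y: "norm y = 1" "\<forall>e\<in>V. e \<bullet> y = 0" "\<forall>f\<in>F. f \<bullet> y = 0"
        using nontransversal_iff[OF sV sF] nV[OF F] by blast
      have "\<forall>i<a. v i \<bullet> y = 0" using y(2) unfolding V_def by (auto intro: span_base)
      moreover have "proj_mat F *v y = 0" using proj_mat_zero_iff[OF sF] y(3) by blast
      ultimately have "H2 (v, F) y = 0" unfolding H2_def using y(1) by simp
      then show "F \<in> Pair v -` Q" unfolding Q_def using vs F(1) space_mu
        by (auto simp: space_pair_measure)
    qed
    have "emeasure \<mu> {F \<in> grass b. \<not> transversal (tuple_span a v) F} \<le> emeasure \<mu> (Pair v -` Q)"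
      by (rule emeasure_mono[OF sub sets_Pair1[OF Qm]])
    then have "0 < emeasure \<mu> (Pair v -` Q)" using pos by simp
    then show "v \<in> Y" unfolding Y_def using vs by blast
  qed
  have X0: "emeasure (GM a) (tuple_span a -` S \<inter> space (GM a)) = 0"
    using emeasure_mono[OF XY Ym] Y0 by simp
  have "emeasure (grass_measure a :: (real^'n) set measure) S = 0"
    unfolding grass_measure_def distr_def emeasure_measure_of_conv using X0 by simp
  moreover have "S \<in> sets (grass_measure a :: (real^'n) set measure)"
    using Sm by (simp add: grass_measure_def)
  ultimately show ?thesis unfolding S_def[symmetric] by (simp add: null_sets_def)
qed

end
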